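(* Let $f\in(0,1)$ be a target frequency, $\epsilon>0$, $K,P\in\mathbb{Z}_{\ge1}$, and $\eta_g,\eta_s\in(0,1)$. Let $c$ be a candidate pattern whose true frequency $f_c\in[0,1]$ is the fraction of data owners whose local data contain $c$. Suppose $c$ has been responded to in $m_c\ge 1$ rounds, in each of which $P$ data owners respond, so $n_c=Pm_c$, and its accumulated response is $$r_c=\sum_{k=1}^{n_c} B_k+\sum_{\ell=1}^{m_c} G_\ell,$$ where $B_1,\dots,B_{n_c}$ are i.i.d. Bernoulli$(f_c)$ random variables (indicators that the sampled responding data owners contain $c$), $G_1,\dots,G_{m_c}$ are i.i.d. two-sided geometric random variables with parameter $\alpha=e^{-\epsilon/K}$, and the $B_k$ are independent of the $G_\ell$. Then $c$ is not a frequent pattern (i.e. $f_c< f$, or at least $f_c\le f$) with confidence $(1-\eta_g)(1-\eta_s)$ when $$\frac{r_c}{n_c}+\sqrt{\frac{2e^{-\epsilon/K}}{2(1-e^{-\epsilon/K})^2P^2m_c\eta_g}}+\sqrt{\frac{\ln\eta_s}{-2n_c}}\ \le\ f;$$ that is, with probability at least $(1-\eta_g)(1-\eta_s)$ one has $f_c\le \frac{r_c}{n_c}+\sqrt{\frac{2e^{-\epsilon/K}}{2(1-e^{-\epsilon/K})^2P^2m_c\eta_g}}+\sqrt{\frac{\ln\eta_s}{-2n_c}}$, so that whenever the left-hand side of the displayed inequality is at most $f$, $f_c\le f$.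
   Context: A two-sided geometric random variable $G(\alpha)$, $\alpha\in(0,1)$, has $\mathbb{P}(G(\alpha)=x)=\frac{1-\alpha}{1+\alpha}\alpha^{|x|}$ for $x\in\mathbb{Z}$; it arises as the aggregate of the distributed Pólya noises added by the $P$ responders of a candidate in one round. A pattern is frequent if its frequency among the data owners is at least the target frequency $f$. *)

theory Defs
  imports "HOL-Probability.Probability"
begin

definition two_sided_geom_pmf :: "real \<Rightarrow> int \<Rightarrow> real" where
  "two_sided_geom_pmf \<alpha> x = (1 - \<alpha>) / (1 + \<alpha>) * \<alpha> ^ nat \<bar>x\<bar>"

end

theory Submission
  imports Defs
begin

lemma aux1: "(w::real) \<noteq> 0 \<Longrightarrow> (0 * w^2 - 1 * (real 2 * ((0 - 1) * w ^ (2 - Suc 0)))) / (w^2 * w^2) = 2 / w^3"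
  by (simp add: field_simps power2_eq_square power3_eq_cube)

lemma aux2: "(w::real) \<noteq> 0 \<Longrightarrow> 2 / w^3 - 3 * (1 / w^2) + 1 / w = (1 - w) * (1 + (1 - w)) / w^3"
  by (simp add: field_simps power2_eq_square power3_eq_cube)

lemma aux3: "(w::real) \<noteq> 0 \<Longrightarrow> u \<noteq> 0 \<Longrightarrow> 2 * (w / u) * (a * u / w^3) = 2 * a / w^2"
  by (simp add: field_simps power3_eq_cube power2_eq_square)

lemma geom_deriv2_sums:
  fixes z :: real
  assumes "\<bar>z\<bar> < 1"
  shows "(\<lambda>n. real (Suc n) * real (Suc (Suc n)) * z ^ n) sums (2 / (1 - z)^3)"
proof -
  have "(\<lambda>n. diffs (\<lambda>n. real (Suc n)) n * z^n) sums (2 / (1 - z)^3)"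
  proof (rule termdiffs_sums_strong[where K=1])
    fix z :: real assume "norm z < 1"
    thus "(\<lambda>n. real (Suc n) * z^n) sums (1 / (1 - z)^2)"
      using geometric_deriv_sums[of z] by simp
  next
    have w: "1 - z \<noteq> 0" using assms by auto
    show "((\<lambda>z. 1 / (1 - z)^2) has_field_derivative (2 / (1 - z)^3)) (at z)"
      apply (rule derivative_eq_intros refl)+
      using w apply simp
      by (rule aux1[OF w])
  qed (use assms in auto)
  thus ?thesis unfolding diffs_def by (simp add: mult.commute)
qed

lemma sq_geom_sums:
  fixes z :: real
  assumes "0 \<le> z" "z < 1"
  shows "(\<lambda>n. real n ^ 2 * z ^ n) sums (z * (1 + z) / (1 - z)^3)"
proof -
  have a: "(\<lambda>n. real (Suc n) * real (Suc (Suc n)) * z ^ n) sums (2 / (1 - z)^3)"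
    using geom_deriv2_sums[of z] assms by simp
  have b: "(\<lambda>n. real (Suc n) * z ^ n) sums (1 / (1 - z)^2)"
    using geometric_deriv_sums[of z] assms by simp
  have c: "(\<lambda>n. z ^ n) sums (1 / (1 - z))"
    using geometric_sums[of z] assms by simp
  have "(\<lambda>n. real (Suc n) * real (Suc (Suc n)) * z ^ n - 3 * (real (Suc n) * z ^ n) + z ^ n)
      sums (2 / (1 - z)^3 - 3 * (1 / (1 - z)^2) + 1 / (1 - z))"
    by (intro sums_add sums_diff sums_mult a b c)
  moreover have "(\<lambda>n. real (Suc n) * real (Suc (Suc n)) * z ^ n - 3 * (real (Suc n) * z ^ n) + z ^ n)
     = (\<lambda>n. real n ^ 2 * z ^ n)"
    by (auto simp: fun_eq_iff algebra_simps power2_eq_square)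
  moreover have "2 / (1 - z)^3 - 3 * (1 / (1 - z)^2) + 1 / (1 - z) = z * (1 + z) / (1 - z)^3"
    using aux2[of "1 - z"] assms by simp
  ultimately show ?thesis by simp
qed


lemma measure_eqI_countable_AE_borel:
  fixes M N :: "real measure"
  assumes [simp]: "sets M = sets borel" "sets N = sets borel"
  assumes ae: "AE x in M. x \<in> \<Omega>" "AE x in N. x \<in> \<Omega>" and [simp]: "countable \<Omega>"
  assumes eq: "\<And>x. x \<in> \<Omega> \<Longrightarrow> emeasure M {x} = emeasure N {x}"
  shows "M = N"
proof (rule measure_eqI)
  fix A assume A: "A \<in> sets M"
  have cs: "\<And>S::real set. countable S \<Longrightarrow> S \<in> sets borel"
    by (rule sets.countable) (auto intro: borel_closed)
  have cnt: "countable {x\<in>\<Omega>. x \<in> A}" by (rule countable_subset[of _ \<Omega>]) auto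
  have "emeasure N A = emeasure N {x\<in>\<Omega>. x \<in> A}"
    using ae A cs[OF cnt] by (intro emeasure_eq_AE) auto
  also have "\<dots> = (\<integral>\<^sup>+x. emeasure N {x} \<partial>count_space {x\<in>\<Omega>. x \<in> A})"
    using cnt by (intro emeasure_countable_singleton) auto
  also have "\<dots> = (\<integral>\<^sup>+x. emeasure M {x} \<partial>count_space {x\<in>\<Omega>. x \<in> A})"
    by (intro nn_integral_cong eq[symmetric]) auto
  also have "\<dots> = emeasure M {x\<in>\<Omega>. x \<in> A}"
    using cnt by (intro emeasure_countable_singleton[symmetric]) auto
  also have "\<dots> = emeasure M A"
    using ae A cs[OF cnt] by (intro emeasure_eq_AE) auto
  finally show "emeasure M A = emeasure N A" ..
qed simp

lemma (in prob_space) tsg_AE_int: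
  fixes Z :: "'a \<Rightarrow> real" and \<alpha> :: real
  assumes Zm[measurable]: "Z \<in> borel_measurable M" and \<alpha>: "0 < \<alpha>" "\<alpha> < 1"
    and pz: "\<And>x::int. prob {\<omega>\<in>space M. Z \<omega> = real_of_int x} = two_sided_geom_pmf \<alpha> x"
  shows "AE \<omega> in M. Z \<omega> \<in> range real_of_int"
proof -
  define c where "c = (1 - \<alpha>) / (1 + \<alpha>)"
  define A where "A k = {\<omega>\<in>space M. Z \<omega> = real k}" for k :: nat
  define B where "B k = {\<omega>\<in>space M. Z \<omega> = - real (Suc k)}" for k :: nat
  have Asets: "range A \<subseteq> sets M" and Bsets: "range B \<subseteq> sets M"
    unfolding A_def B_def by auto
  have Adisj: "disjoint_family A" and Bdisj: "disjoint_family B"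
    unfolding A_def B_def disjoint_family_on_def by auto
  have pA: "prob (A k) = c * \<alpha> ^ k" for k
    using pz[of "int k"] unfolding A_def c_def two_sided_geom_pmf_def by simp
  have pB: "prob (B k) = (c * \<alpha>) * \<alpha> ^ k" for k
  proof -
    have "prob (B k) = two_sided_geom_pmf \<alpha> (- int (Suc k))"
      using pz[of "- int (Suc k)"] unfolding B_def by simp
    also have "\<dots> = (c * \<alpha>) * \<alpha> ^ k"
      unfolding two_sided_geom_pmf_def c_def by (simp add: nat_add_distrib)
    finally show ?thesis .
  qed
  have sA: "(\<lambda>k. prob (A k)) sums prob (\<Union>k. A k)"
    by (rule measure_UNION[OF Asets Adisj]) simp
  have sA': "(\<lambda>k. prob (A k)) sums (c * (1 / (1 - \<alpha>)))"
    unfolding pA by (intro sums_mult geometric_sums) (use \<alpha> in simp)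
  have sB: "(\<lambda>k. prob (B k)) sums prob (\<Union>k. B k)"
    by (rule measure_UNION[OF Bsets Bdisj]) simp
  have sB': "(\<lambda>k. prob (B k)) sums ((c * \<alpha>) * (1 / (1 - \<alpha>)))"
    unfolding pB by (intro sums_mult geometric_sums) (use \<alpha> in simp)
  have eqA: "prob (\<Union>k. A k) = c / (1 - \<alpha>)" using sums_unique2[OF sA sA'] by simp
  have eqB: "prob (\<Union>k. B k) = c * \<alpha> / (1 - \<alpha>)" using sums_unique2[OF sB sB'] by simp
  have disjAB: "(\<Union>k. A k) \<inter> (\<Union>k. B k) = {}"
    unfolding A_def B_def by auto
  have "prob ((\<Union>k. A k) \<union> (\<Union>k. B k)) = prob (\<Union>k. A k) + prob (\<Union>k. B k)"
    using Asets Bsets disjAB by (intro finite_measure_Union) auto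
  also have "\<dots> = 1"
  proof -
    have e1: "c / (1 - \<alpha>) = 1 / (1 + \<alpha>)" using \<alpha> by (simp add: c_def)
    have e2: "c * \<alpha> / (1 - \<alpha>) = \<alpha> / (1 + \<alpha>)" using \<alpha> by (simp add: c_def)
    have "1 / (1 + \<alpha>) + \<alpha> / (1 + \<alpha>) = 1" using \<alpha> by (simp add: add_divide_distrib[symmetric])
    then show ?thesis unfolding eqA eqB e1 e2 .
  qed
  finally have p1: "prob ((\<Union>k. A k) \<union> (\<Union>k. B k)) = 1" .
  have sub: "(\<Union>k. A k) \<union> (\<Union>k. B k) \<subseteq> {\<omega>\<in>space M. Z \<omega> \<in> range real_of_int}"
  proof safe
    fix \<omega> k assume "\<omega> \<in> A k" then show "Z \<omega> \<in> range real_of_int"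
      unfolding A_def by (auto intro!: range_eqI[of _ _ "int k"])
  next
    fix \<omega> k assume "\<omega> \<in> B k" then show "Z \<omega> \<in> range real_of_int"
      unfolding A_def B_def by (auto intro!: range_eqI[of _ _ "- int (Suc k)"])
  qed (auto simp: A_def B_def)
  have "AE \<omega> in M. \<omega> \<in> (\<Union>k. A k) \<union> (\<Union>k. B k)"
    using Asets Bsets p1 by (intro AE_prob_1) auto
  then show ?thesis
    by eventually_elim (use sub in blast)
qed


lemma (in prob_space) tsg_sym:
  fixes Z :: "'a \<Rightarrow> real" and \<alpha> :: real
  assumes Zm[measurable]: "Z \<in> borel_measurable M" and \<alpha>: "0 < \<alpha>" "\<alpha> < 1"
    and pz: "\<And>x::int. prob {\<omega>\<in>space M. Z \<omega> = real_of_int x} = two_sided_geom_pmf \<alpha> x"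
  shows "distr M borel Z = distr M borel (\<lambda>\<omega>. - Z \<omega>)"
proof (rule measure_eqI_countable_AE_borel[where \<Omega>="range real_of_int"])
  have ae: "AE \<omega> in M. Z \<omega> \<in> range real_of_int" by (rule tsg_AE_int[OF Zm \<alpha> pz])
  have ri: "range real_of_int \<in> sets borel"
    by (rule sets.countable) (auto intro: borel_closed)
  show "AE x in distr M borel Z. x \<in> range real_of_int"
    using ae ri by (subst AE_distr_iff) auto
  have ae': "AE \<omega> in M. - Z \<omega> \<in> range real_of_int"
    using ae by eventually_elim (auto intro: range_eqI[of _ _ "- _"])
  show "AE x in distr M borel (\<lambda>\<omega>. - Z \<omega>). x \<in> range real_of_int"
    using ae' ri by (subst AE_distr_iff) auto
  fix x assume "x \<in> range real_of_int"
  then obtain j where j: "x = real_of_int j" by auto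
  have "emeasure (distr M borel Z) {x} = emeasure M {\<omega>\<in>space M. Z \<omega> = real_of_int j}"
    by (subst emeasure_distr) (auto simp: j intro!: arg_cong[where f="emeasure M"])
  also have "\<dots> = ennreal (two_sided_geom_pmf \<alpha> j)"
    using pz[of j] by (simp add: emeasure_eq_measure)
  also have "\<dots> = ennreal (two_sided_geom_pmf \<alpha> (- j))"
    by (simp add: two_sided_geom_pmf_def)
  also have "\<dots> = emeasure M {\<omega>\<in>space M. Z \<omega> = real_of_int (- j)}"
    using pz[of "- j"] by (simp add: emeasure_eq_measure)
  also have "\<dots> = emeasure (distr M borel (\<lambda>\<omega>. - Z \<omega>)) {x}"
    by (subst emeasure_distr) (auto simp: j intro!: arg_cong[where f="emeasure M"])
  finally show "emeasure (distr M borel Z) {x} = emeasure (distr M borel (\<lambda>\<omega>. - Z \<omega>)) {x}" .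
qed (auto simp: countable_image)

lemma (in prob_space) tsg_second_moment:
  fixes Z :: "'a \<Rightarrow> real" and \<alpha> :: real
  assumes Zm[measurable]: "Z \<in> borel_measurable M" and \<alpha>: "0 < \<alpha>" "\<alpha> < 1"
    and pz: "\<And>x::int. prob {\<omega>\<in>space M. Z \<omega> = real_of_int x} = two_sided_geom_pmf \<alpha> x"
  shows "(\<integral>\<^sup>+\<omega>. ennreal ((Z \<omega>)^2) \<partial>M) = ennreal (2 * \<alpha> / (1 - \<alpha>)^2)"
proof -
  define c where "c = (1 - \<alpha>) / (1 + \<alpha>)"
  define h where "h k x = ennreal (real k ^ 2) * (indicator {real k} x + indicator {- real k} x)"
    for k :: nat and x :: real
  have ae: "AE \<omega> in M. Z \<omega> \<in> range real_of_int" by (rule tsg_AE_int[OF Zm \<alpha> pz])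
  have hm[measurable]: "h k \<in> borel_measurable borel" for k
    unfolding h_def by measurable
  have hsum: "(\<Sum>k. h k x) = ennreal (x^2)" if "x \<in> range real_of_int" for x
  proof -
    from that obtain j where j: "x = real_of_int j" by auto
    have "h k x = (if k = nat \<bar>j\<bar> then ennreal (x^2) else 0)" for k
    proof (cases "k = nat \<bar>j\<bar>")
      case True
      then show ?thesis
        by (cases "j \<ge> 0") (auto simp: h_def j indicator_def)
    next
      case False
      then have "real k \<noteq> x" "- real k \<noteq> x" unfolding j by linarith+
      then show ?thesis using False by (simp add: h_def indicator_def)
    qed
    then have "(\<lambda>k. h k x) = (\<lambda>k. if k = nat \<bar>j\<bar> then ennreal (x^2) else 0)" by auto
    then show ?thesis using sums_unique[OF sums_single[of "nat \<bar>j\<bar>" "\<lambda>_. ennreal (x^2)"]] by simp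
  qed
  have "(\<integral>\<^sup>+\<omega>. ennreal ((Z \<omega>)^2) \<partial>M) = (\<integral>\<^sup>+\<omega>. (\<Sum>k. h k (Z \<omega>)) \<partial>M)"
    using ae by (intro nn_integral_cong_AE) (auto simp: hsum)
  also have "\<dots> = (\<Sum>k. \<integral>\<^sup>+\<omega>. h k (Z \<omega>) \<partial>M)"
    by (intro nn_integral_suminf) (auto simp: h_def)
  also have "\<dots> = (\<Sum>k. ennreal (2 * c * (real k ^ 2 * \<alpha> ^ k)))"
  proof (intro suminf_cong)
    fix k
    have "(\<integral>\<^sup>+\<omega>. h k (Z \<omega>) \<partial>M) = (\<integral>\<^sup>+x. h k x \<partial>distr M borel Z)"
      by (subst nn_integral_distr) auto
    also have "\<dots> = ennreal (real k ^ 2) * (emeasure (distr M borel Z) {real k} + emeasure (distr M borel Z) {- real k})"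
      unfolding h_def by (subst nn_integral_cmult) (auto simp: nn_integral_add)
    also have "emeasure (distr M borel Z) {real k} = emeasure M {\<omega>\<in>space M. Z \<omega> = real_of_int (int k)}"
      by (subst emeasure_distr) (auto intro!: arg_cong[where f="emeasure M"])
    also have "\<dots> = ennreal (c * \<alpha> ^ k)"
      using pz[of "int k"] by (simp add: emeasure_eq_measure two_sided_geom_pmf_def c_def)
    also have "emeasure (distr M borel Z) {- real k} = emeasure M {\<omega>\<in>space M. Z \<omega> = real_of_int (- int k)}"
      by (subst emeasure_distr) (auto intro!: arg_cong[where f="emeasure M"])
    also have "\<dots> = ennreal (c * \<alpha> ^ k)"
      using pz[of "- int k"] by (simp add: emeasure_eq_measure two_sided_geom_pmf_def c_def)
    also have "ennreal (real k ^ 2) * (ennreal (c * \<alpha> ^ k) + ennreal (c * \<alpha> ^ k)) = ennreal (2 * c * (real k ^ 2 * \<alpha> ^ k))"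
      using \<alpha> by (simp add: c_def flip: ennreal_plus ennreal_mult)
    finally show "(\<integral>\<^sup>+\<omega>. h k (Z \<omega>) \<partial>M) = ennreal (2 * c * (real k ^ 2 * \<alpha> ^ k))" .
  qed
  also have "\<dots> = ennreal (\<Sum>k. 2 * c * (real k ^ 2 * \<alpha> ^ k))"
    using \<alpha> sq_geom_sums[of \<alpha>]
    by (intro suminf_ennreal2) (auto simp: c_def intro!: summable_mult sums_summable)
  also have "(\<Sum>k. 2 * c * (real k ^ 2 * \<alpha> ^ k)) = 2 * c * (\<alpha> * (1 + \<alpha>) / (1 - \<alpha>)^3)"
    using \<alpha> sq_geom_sums[of \<alpha>] by (intro sums_unique[symmetric] sums_mult) auto
  also have "\<dots> = 2 * \<alpha> / (1 - \<alpha>)^2"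
    unfolding c_def by (rule aux3) (use \<alpha> in auto)
  finally show ?thesis .
qed


lemma (in prob_space) tsg_moments:
  fixes Z :: "'a \<Rightarrow> real" and \<alpha> :: real
  assumes Zm[measurable]: "Z \<in> borel_measurable M" and \<alpha>: "0 < \<alpha>" "\<alpha> < 1"
    and pz: "\<And>x::int. prob {\<omega>\<in>space M. Z \<omega> = real_of_int x} = two_sided_geom_pmf \<alpha> x"
  shows "integrable M (\<lambda>\<omega>. (Z \<omega>)^2)" "expectation (\<lambda>\<omega>. (Z \<omega>)^2) = 2 * \<alpha> / (1 - \<alpha>)^2"
    "integrable M Z" "expectation Z = 0"
proof -
  have "0 \<le> 2 * \<alpha> / (1 - \<alpha>)^2" using \<alpha> by simp
  then have *: "integrable M (\<lambda>\<omega>. (Z \<omega>)^2) \<and> expectation (\<lambda>\<omega>. (Z \<omega>)^2) = 2 * \<alpha> / (1 - \<alpha>)^2"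
  proof -
    have iff: "(\<integral>\<^sup>+\<omega>. ennreal ((Z \<omega>)^2) \<partial>M) = ennreal (2 * \<alpha> / (1 - \<alpha>)^2) \<longleftrightarrow>
      (integrable M (\<lambda>\<omega>. (Z \<omega>)^2) \<and> expectation (\<lambda>\<omega>. (Z \<omega>)^2) = 2 * \<alpha> / (1 - \<alpha>)^2)"
      by (rule nn_integral_eq_integrable) (use \<open>0 \<le> 2 * \<alpha> / (1 - \<alpha>)^2\<close> in auto)
    show ?thesis using iff tsg_second_moment[OF Zm \<alpha> pz] by blast
  qed
  then show "integrable M (\<lambda>\<omega>. (Z \<omega>)^2)" "expectation (\<lambda>\<omega>. (Z \<omega>)^2) = 2 * \<alpha> / (1 - \<alpha>)^2"
    by auto
  show "integrable M Z"
    by (rule square_integrable_imp_integrable[OF Zm]) (use * in blast)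
  have "expectation Z = integral\<^sup>L (distr M borel Z) (\<lambda>x. x)"
    by (subst integral_distr) auto
  also have "\<dots> = integral\<^sup>L (distr M borel (\<lambda>\<omega>. - Z \<omega>)) (\<lambda>x. x)"
    by (simp only: tsg_sym[OF Zm \<alpha> pz])
  also have "\<dots> = - expectation Z"
    by (subst integral_distr) (auto simp: integral_minus)
  finally show "expectation Z = 0" by simp
qed

lemma alg_geo0:
  fixes p m \<alpha> \<eta> w :: real
  assumes "p > 0" "m > 0" "\<alpha> > 0" "w > 0" "\<eta> > 0"
  shows "(m * (2*\<alpha>/w^2)) / ((p*m) * sqrt (2*\<alpha>/(2*w^2*p^2*m*\<eta>)))^2 = 2*\<eta>"
proof -
  have "((p*m) * sqrt (2*\<alpha>/(2*w^2*p^2*m*\<eta>)))^2 = (p*m)^2 * (2*\<alpha>/(2*w^2*p^2*m*\<eta>))"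
    using assms by (simp add: power_mult_distrib)
  also have "\<dots> = m * \<alpha> / (w^2 * \<eta>)"
    using assms by (simp add: field_simps power2_eq_square)
  finally show ?thesis using assms by (simp add: field_simps power2_eq_square)
qed
lemma alg_geo:
  fixes p m \<alpha> \<eta> :: real
  assumes "p > 0" "m > 0" "\<alpha> > 0" "\<alpha> < 1" "\<eta> > 0"
  shows "(m * (2*\<alpha>/(1-\<alpha>)^2)) / ((p*m) * sqrt (2*\<alpha>/(2*(1-\<alpha>)^2*p^2*m*\<eta>)))^2 = 2*\<eta>"
  using alg_geo0[of p m \<alpha> "1-\<alpha>" \<eta>] assms by simp

theorem theorem4:
  fixes M :: "'a measure"
    and f f\<^sub>c \<epsilon> \<eta>\<^sub>g \<eta>\<^sub>s :: real
    and K P m\<^sub>c :: nat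
    and B G :: "nat \<Rightarrow> 'a \<Rightarrow> real"
  assumes "prob_space M"
    and "0 < f" "f < 1"
    and "0 < \<epsilon>"
    and "1 \<le> K" "1 \<le> P"
    and "0 < \<eta>\<^sub>g" "\<eta>\<^sub>g < 1" "0 < \<eta>\<^sub>s" "\<eta>\<^sub>s < 1"
    and "0 \<le> f\<^sub>c" "f\<^sub>c \<le> 1"
    and "1 \<le> m\<^sub>c"
    and B_bin: "\<And>k. k \<in> {1..P * m\<^sub>c} \<Longrightarrow> \<forall>\<omega>\<in>space M. B k \<omega> \<in> {0, 1}"
    and B_bern: "\<And>k. k \<in> {1..P * m\<^sub>c} \<Longrightarrow> measure M {\<omega> \<in> space M. B k \<omega> = 1} = f\<^sub>c"
    and G_geom: "\<And>l x. l \<in> {1..m\<^sub>c} \<Longrightarrow>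
        measure M {\<omega> \<in> space M. G l \<omega> = real_of_int x} = two_sided_geom_pmf (exp (- \<epsilon> / real K)) x"
    and indep: "prob_space.indep_vars M (\<lambda>_. borel) (\<lambda>i. case_sum B G i)
                  (Inl ` {1..P * m\<^sub>c} \<union> Inr ` {1..m\<^sub>c})"
  shows "measure M {\<omega> \<in> space M.
            f\<^sub>c \<le> ((\<Sum>k=1..P * m\<^sub>c. B k \<omega>) + (\<Sum>l=1..m\<^sub>c. G l \<omega>)) / real (P * m\<^sub>c)
                 + sqrt (2 * exp (- \<epsilon> / real K)
                     / (2 * (1 - exp (- \<epsilon> / real K))^2 * (real P)^2 * real m\<^sub>c * \<eta>\<^sub>g))
                 + sqrt (ln \<eta>\<^sub>s / (- 2 * real (P * m\<^sub>c)))}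
         \<ge> (1 - \<eta>\<^sub>g) * (1 - \<eta>\<^sub>s)
       \<and> measure M {\<omega> \<in> space M.
            ((\<Sum>k=1..P * m\<^sub>c. B k \<omega>) + (\<Sum>l=1..m\<^sub>c. G l \<omega>)) / real (P * m\<^sub>c)
                 + sqrt (2 * exp (- \<epsilon> / real K)
                     / (2 * (1 - exp (- \<epsilon> / real K))^2 * (real P)^2 * real m\<^sub>c * \<eta>\<^sub>g))
                 + sqrt (ln \<eta>\<^sub>s / (- 2 * real (P * m\<^sub>c))) \<le> f
            \<longrightarrow> f\<^sub>c \<le> f}
         \<ge> (1 - \<eta>\<^sub>g) * (1 - \<eta>\<^sub>s)"
proof -
  interpret prob_space M by fact
  define n where "n = P * m\<^sub>c"
  define \<alpha> where "\<alpha> = exp (- \<epsilon> / real K)"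
  define a where "a = sqrt (2 * \<alpha> / (2 * (1 - \<alpha>)^2 * (real P)^2 * real m\<^sub>c * \<eta>\<^sub>g))"
  define b where "b = sqrt (ln \<eta>\<^sub>s / (- 2 * real n))"
  define SB where "SB = (\<lambda>\<omega>. \<Sum>k=1..n. B k \<omega>)"
  define SG where "SG = (\<lambda>\<omega>. \<Sum>l=1..m\<^sub>c. G l \<omega>)"
  define X where "X = (\<lambda>i. case_sum B G i)"
  define JB where "JB = (Inl ` {1..n} :: (nat + nat) set)"
  define JG where "JG = (Inr ` {1..m\<^sub>c} :: (nat + nat) set)"
  define t where "t = real n * a"
  have indX: "indep_vars (\<lambda>_. borel) X (JB \<union> JG)"
    using indep unfolding X_def JB_def JG_def n_def .
  have n1: "1 \<le> n" unfolding n_def using assms(6,13) by (simp add: one_le_mult_iff)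
  have \<alpha>01: "0 < \<alpha>" "\<alpha> < 1"
    unfolding \<alpha>_def using assms(4,5) by auto
  have rvX: "random_variable borel (X i)" if "i \<in> JB \<union> JG" for i
    using indX that unfolding indep_vars_def by blast
  have rvB[measurable]: "B k \<in> borel_measurable M" if "k \<in> {1..n}" for k
    using rvX[of "Inl k"] that unfolding X_def JB_def by auto
  have rvG[measurable]: "G l \<in> borel_measurable M" if "l \<in> {1..m\<^sub>c}" for l
    using rvX[of "Inr l"] that unfolding X_def JG_def by auto
  have SBm[measurable]: "SB \<in> borel_measurable M"
    unfolding SB_def by (intro borel_measurable_sum rvB) auto
  have SGm[measurable]: "SG \<in> borel_measurable M"
    unfolding SG_def by (intro borel_measurable_sum rvG) auto
  have indSBSG: "indep_var borel SB borel SG"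
  proof -
    have dj: "JB \<inter> JG = {}" unfolding JB_def JG_def by auto
    have "indep_var (PiM JB (\<lambda>_. borel)) (\<lambda>\<omega>. restrict (\<lambda>i. X i \<omega>) JB)
                    (PiM JG (\<lambda>_. borel)) (\<lambda>\<omega>. restrict (\<lambda>i. X i \<omega>) JG)"
      by (rule indep_var_restrict[OF indX dj]) auto
    then have "indep_var borel ((\<lambda>f. \<Sum>i\<in>JB. f i) \<circ> (\<lambda>\<omega>. restrict (\<lambda>i. X i \<omega>) JB))
                         borel ((\<lambda>f. \<Sum>i\<in>JG. f i) \<circ> (\<lambda>\<omega>. restrict (\<lambda>i. X i \<omega>) JG))"
      by (rule indep_var_compose)
         (auto intro!: borel_measurable_sum measurable_component_singleton)
    also have "(\<lambda>f. \<Sum>i\<in>JB. f i) \<circ> (\<lambda>\<omega>. restrict (\<lambda>i. X i \<omega>) JB) = SB"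
      by (auto simp: fun_eq_iff SB_def JB_def X_def sum.reindex)
    also have "(\<lambda>f. \<Sum>i\<in>JG. f i) \<circ> (\<lambda>\<omega>. restrict (\<lambda>i. X i \<omega>) JG) = SG"
      by (auto simp: fun_eq_iff SG_def JG_def X_def sum.reindex)
    finally show ?thesis .
  qed
  have hoeff: "prob {\<omega>\<in>space M. SB \<omega> \<le> real n * f\<^sub>c - real n * b} \<le> \<eta>\<^sub>s"
  proof -
    have EB: "expectation (B k) = f\<^sub>c" if k: "k \<in> {1..n}" for k
    proof -
      have "expectation (B k) = expectation (indicator {\<omega>\<in>space M. B k \<omega> = 1})"
        using B_bin[of k] k unfolding n_def by (intro Bochner_Integration.integral_cong) (auto simp: indicator_def)
      also have "\<dots> = prob {\<omega>\<in>space M. B k \<omega> = 1}"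
        by (simp add: Int_absorb2)
      also have "\<dots> = f\<^sub>c" using B_bern[of k] k unfolding n_def by simp
      finally show ?thesis .
    qed
    have finJB: "finite JB" unfolding JB_def by simp
    have cardJB: "card JB = n" unfolding JB_def by (simp add: card_image)
    have sumE: "(\<Sum>i\<in>JB. expectation (X i)) = real n * f\<^sub>c"
      unfolding JB_def by (simp add: sum.reindex X_def EB)
    interpret H: Hoeffding_ineq M JB X "\<lambda>_. 0" "\<lambda>_. 1" "real n * f\<^sub>c"
    proof unfold_locales
      show "finite JB" by fact
      show "indep_vars (\<lambda>_. borel) X JB" by (rule indep_vars_subset[OF indX]) auto
      fix i assume "i \<in> JB"
      then obtain k where k: "k \<in> {1..n}" "i = Inl k" unfolding JB_def by auto
      show "AE x in M. X i x \<in> {0..1}"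
        using B_bin[of k] k unfolding n_def X_def by (intro AE_I2) auto
    qed (use sumE in simp)
    have lnneg: "ln \<eta>\<^sub>s < 0" using assms(9,10) by simp
    have b0: "0 \<le> b" unfolding b_def using lnneg n1 by (simp add: divide_nonpos_pos)
    have bsq: "b^2 = ln \<eta>\<^sub>s / (- 2 * real n)"
      unfolding b_def using n1 lnneg by (intro real_sqrt_pow2) (simp add: divide_nonpos_pos)
    have "prob {x\<in>space M. (\<Sum>i\<in>JB. X i x) \<le> real n * f\<^sub>c - real n * b}
          \<le> exp (-2 * (real n * b)\<^sup>2 / (\<Sum>i\<in>JB. (1 - 0)\<^sup>2))"
      using n1 b0 finJB cardJB by (intro H.Hoeffding_ineq_le) auto
    also have "(\<Sum>i\<in>JB. (1 - 0 :: real)\<^sup>2) = real n" using cardJB by simp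
    also have "-2 * (real n * b)\<^sup>2 / real n = ln \<eta>\<^sub>s"
    proof -
      have "-2 * (real n * b)\<^sup>2 / real n = -2 * real n * b^2"
        using n1 by (simp add: power2_eq_square)
      also have "\<dots> = ln \<eta>\<^sub>s" unfolding bsq using n1 by simp
      finally show ?thesis .
    qed
    also have "exp (ln \<eta>\<^sub>s) = \<eta>\<^sub>s" using assms(9) by simp
    also have "(\<lambda>x. \<Sum>i\<in>JB. X i x) = SB"
      by (auto simp: fun_eq_iff SB_def JB_def X_def sum.reindex)
    finally show ?thesis .
  qed
  have geo: "prob {\<omega>\<in>space M. SG \<omega> < - t} \<le> \<eta>\<^sub>g"
  proof -
    have mom: "integrable M (\<lambda>\<omega>. (G l \<omega>)^2) \<and> expectation (\<lambda>\<omega>. (G l \<omega>)^2) = 2 * \<alpha> / (1 - \<alpha>)^2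
       \<and> integrable M (G l) \<and> expectation (G l) = 0" if l: "l \<in> {1..m\<^sub>c}" for l
      using tsg_moments[OF rvG[OF l] \<alpha>01 G_geom[OF l, folded \<alpha>_def]] by blast
    have indG2: "indep_var borel (G l) borel (G l')"
      if l: "l \<in> {1..m\<^sub>c}" "l' \<in> {1..m\<^sub>c}" "l \<noteq> l'" for l l'
    proof -
      have "indep_var (PiM {Inr l} (\<lambda>_. borel)) (\<lambda>\<omega>. restrict (\<lambda>i. X i \<omega>) {Inr l})
                      (PiM {Inr l'} (\<lambda>_. borel)) (\<lambda>\<omega>. restrict (\<lambda>i. X i \<omega>) {Inr l'})"
        by (rule indep_var_restrict[OF indX]) (use l in \<open>auto simp: JG_def\<close>)
      then have "indep_var borel ((\<lambda>f. f (Inr l)) \<circ> (\<lambda>\<omega>. restrict (\<lambda>i. X i \<omega>) {Inr l}))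
                           borel ((\<lambda>f. f (Inr l')) \<circ> (\<lambda>\<omega>. restrict (\<lambda>i. X i \<omega>) {Inr l'}))"
        by (rule indep_var_compose) (auto intro!: measurable_component_singleton)
      also have "(\<lambda>f. f (Inr l)) \<circ> (\<lambda>\<omega>. restrict (\<lambda>i. X i \<omega>) {Inr l}) = G l"
        by (auto simp: fun_eq_iff X_def)
      also have "(\<lambda>f. f (Inr l')) \<circ> (\<lambda>\<omega>. restrict (\<lambda>i. X i \<omega>) {Inr l'}) = G l'"
        by (auto simp: fun_eq_iff X_def)
      finally show ?thesis .
    qed
    have cross: "integrable M (\<lambda>\<omega>. G l \<omega> * G l' \<omega>) \<and> expectation (\<lambda>\<omega>. G l \<omega> * G l' \<omega>) = 0"
      if l: "l \<in> {1..m\<^sub>c}" "l' \<in> {1..m\<^sub>c}" "l \<noteq> l'" for l l'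
      using indep_var_lebesgue_integral[OF indG2[OF l]] indep_var_integrable[OF indG2[OF l]]
        mom[OF l(1)] mom[OF l(2)] by simp
    have intprod: "integrable M (\<lambda>\<omega>. G l \<omega> * G l' \<omega>)"
      if l: "l \<in> {1..m\<^sub>c}" "l' \<in> {1..m\<^sub>c}" for l l'
      using cross[OF l] mom[OF l(1)] by (cases "l = l'") (auto simp: power2_eq_square)
    have sq_exp: "(\<lambda>\<omega>. (SG \<omega>)^2) = (\<lambda>\<omega>. \<Sum>l\<in>{1..m\<^sub>c}. \<Sum>l'\<in>{1..m\<^sub>c}. G l \<omega> * G l' \<omega>)"
      by (simp add: fun_eq_iff SG_def power2_eq_square sum_product)
    have intSG2: "integrable M (\<lambda>\<omega>. (SG \<omega>)^2)"
      unfolding sq_exp by (intro Bochner_Integration.integrable_sum intprod) auto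
    have inner: "(\<Sum>l'\<in>{1..m\<^sub>c}. expectation (\<lambda>\<omega>. G l \<omega> * G l' \<omega>)) = 2 * \<alpha> / (1 - \<alpha>)^2"
      if l: "l \<in> {1..m\<^sub>c}" for l
    proof -
      have "(\<Sum>l'\<in>{1..m\<^sub>c}. expectation (\<lambda>\<omega>. G l \<omega> * G l' \<omega>))
          = expectation (\<lambda>\<omega>. G l \<omega> * G l \<omega>) + (\<Sum>l'\<in>{1..m\<^sub>c} - {l}. expectation (\<lambda>\<omega>. G l \<omega> * G l' \<omega>))"
        using l by (subst sum.remove) auto
      also have "(\<Sum>l'\<in>{1..m\<^sub>c} - {l}. expectation (\<lambda>\<omega>. G l \<omega> * G l' \<omega>)) = 0"
        using cross l by (intro sum.neutral) auto
      also have "expectation (\<lambda>\<omega>. G l \<omega> * G l \<omega>) = 2 * \<alpha> / (1 - \<alpha>)^2"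
        using mom[OF l] by (simp add: power2_eq_square)
      finally show ?thesis by simp
    qed
    have ESG2: "expectation (\<lambda>\<omega>. (SG \<omega>)^2) = real m\<^sub>c * (2 * \<alpha> / (1 - \<alpha>)^2)"
    proof -
      have "expectation (\<lambda>\<omega>. (SG \<omega>)^2)
          = (\<Sum>l\<in>{1..m\<^sub>c}. \<Sum>l'\<in>{1..m\<^sub>c}. expectation (\<lambda>\<omega>. G l \<omega> * G l' \<omega>))"
        unfolding sq_exp
        by (subst Bochner_Integration.integral_sum)
           (auto intro!: Bochner_Integration.integrable_sum intprod sum.cong Bochner_Integration.integral_sum)
      also have "\<dots> = (\<Sum>l\<in>{1..m\<^sub>c}. 2 * \<alpha> / (1 - \<alpha>)^2)"
        using inner by (intro sum.cong) auto
      finally show ?thesis by simp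
    qed
    have ESG: "expectation SG = 0"
      unfolding SG_def using mom
      by (subst Bochner_Integration.integral_sum) auto
    have np: "0 < real n" using n1 by simp
    have a0: "0 < a" unfolding a_def using \<alpha>01 assms(6,7,13) by simp
    have t0: "0 < t" unfolding t_def using np a0 by simp
    have cheb: "prob {x\<in>space M. \<bar>SG x - expectation SG\<bar> \<ge> t} \<le> variance SG / t\<^sup>2"
      by (rule Chebyshev_inequality[OF SGm intSG2 t0])
    have var: "variance SG = real m\<^sub>c * (2 * \<alpha> / (1 - \<alpha>)^2)"
      using ESG ESG2 by simp
    have ratio: "variance SG / t\<^sup>2 = 2 * \<eta>\<^sub>g"
      unfolding var t_def a_def n_def using alg_geo[of "real P" "real m\<^sub>c" \<alpha> \<eta>\<^sub>g] \<alpha>01 assms(6,7,13)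
      by (simp add: mult.assoc)
    have abs2: "prob {x\<in>space M. t \<le> \<bar>SG x\<bar>} \<le> 2 * \<eta>\<^sub>g"
      using cheb ratio ESG by simp
    have sym: "prob {\<omega>\<in>space M. SG \<omega> < - t} = prob {\<omega>\<in>space M. t < SG \<omega>}"
    proof -
      define W where "W i = (if i \<in> JG then X i else (\<lambda>_. 0::real))" for i
      have JGne: "JG \<noteq> {}" unfolding JG_def using assms(13) by auto
      have rvW: "random_variable borel (W i)" for i
        using rvX[of i] by (cases "i \<in> JG") (auto simp: W_def)
      have rvW': "random_variable borel (\<lambda>x. - W i x)" for i
        using rvW[of i] by measurable
      have indXG: "indep_vars (\<lambda>_. borel) X JG" by (rule indep_vars_subset[OF indX]) auto
      have "indep_vars (\<lambda>_. borel) W JG = indep_vars (\<lambda>_. borel) X JG"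
        by (rule indep_vars_cong) (auto simp: W_def)
      with indXG have indW: "indep_vars (\<lambda>_. borel) W JG" by simp
      have indW': "indep_vars (\<lambda>_. borel) (\<lambda>i x. - W i x) JG"
        by (rule indep_vars_compose2[OF indW, where Y="\<lambda>_ x. - x"]) auto
      have D1: "distr M (PiM JG (\<lambda>_. borel)) (\<lambda>x. \<lambda>i\<in>JG. W i x) = PiM JG (\<lambda>i. distr M borel (W i))"
        using indep_vars_iff_distr_eq_PiM[OF JGne rvW] indW by simp
      have D2: "distr M (PiM JG (\<lambda>_. borel)) (\<lambda>x. \<lambda>i\<in>JG. - W i x) = PiM JG (\<lambda>i. distr M borel (\<lambda>x. - W i x))"
        using indep_vars_iff_distr_eq_PiM[OF JGne rvW'] indW' by simp
      have marg: "distr M borel (W i) = distr M borel (\<lambda>x. - W i x)" if i: "i \<in> JG" for i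
      proof -
        from i obtain l where l: "l \<in> {1..m\<^sub>c}" "i = Inr l" unfolding JG_def by auto
        have "W i = G l" using i l by (simp add: W_def X_def fun_eq_iff)
        then show ?thesis using tsg_sym[OF rvG[OF l(1)] \<alpha>01 G_geom[OF l(1), folded \<alpha>_def]] by simp
      qed
      have D12: "distr M (PiM JG (\<lambda>_. borel)) (\<lambda>x. \<lambda>i\<in>JG. W i x)
               = distr M (PiM JG (\<lambda>_. borel)) (\<lambda>x. \<lambda>i\<in>JG. - W i x)"
        unfolding D1 D2 by (intro PiM_cong) (auto simp: marg)
      have summ: "(\<lambda>f::nat+nat\<Rightarrow>real. \<Sum>i\<in>JG. f i) \<in> borel_measurable (PiM JG (\<lambda>_. borel))"
        using borel_measurable_sum[of JG "\<lambda>i f. f i" "PiM JG (\<lambda>_. borel)"]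
          measurable_component_singleton[of _ JG "\<lambda>_. borel"] by simp
      define S where "S = (\<lambda>f::nat+nat\<Rightarrow>real. \<Sum>i\<in>JG. f i) -` {..< - t} \<inter> space (PiM JG (\<lambda>_. borel))"
      have Ssets: "S \<in> sets (PiM JG (\<lambda>_. borel))"
        unfolding S_def by (rule measurable_sets[OF summ]) auto
      have T1m: "(\<lambda>x. \<lambda>i\<in>JG. W i x) \<in> measurable M (PiM JG (\<lambda>_. borel))"
        using rvW by (intro measurable_restrict) auto
      have T2m: "(\<lambda>x. \<lambda>i\<in>JG. - W i x) \<in> measurable M (PiM JG (\<lambda>_. borel))"
        using rvW' by (intro measurable_restrict) auto
      have sumW: "(\<Sum>i\<in>JG. W i x) = SG x" for x
        unfolding JG_def SG_def W_def X_def by (simp add: sum.reindex JG_def)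
      have pre1: "(\<lambda>x. \<lambda>i\<in>JG. W i x) -` S \<inter> space M = {\<omega>\<in>space M. SG \<omega> < - t}"
        unfolding S_def by (auto simp: space_PiM sumW)
      have pre2: "(\<lambda>x. \<lambda>i\<in>JG. - W i x) -` S \<inter> space M = {\<omega>\<in>space M. t < SG \<omega>}"
        unfolding S_def by (auto simp: space_PiM sum_negf sumW)
      have "prob {\<omega>\<in>space M. SG \<omega> < - t} = measure (distr M (PiM JG (\<lambda>_. borel)) (\<lambda>x. \<lambda>i\<in>JG. W i x)) S"
        unfolding pre1[symmetric] by (rule measure_distr[OF T1m Ssets, symmetric])
      also have "\<dots> = measure (distr M (PiM JG (\<lambda>_. borel)) (\<lambda>x. \<lambda>i\<in>JG. - W i x)) S"
        unfolding D12 ..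
      also have "\<dots> = prob {\<omega>\<in>space M. t < SG \<omega>}"
        unfolding pre2[symmetric] by (rule measure_distr[OF T2m Ssets])
      finally show ?thesis .
    qed
    have "prob {\<omega>\<in>space M. SG \<omega> < - t} + prob {\<omega>\<in>space M. t < SG \<omega>}
        = prob ({\<omega>\<in>space M. SG \<omega> < - t} \<union> {\<omega>\<in>space M. t < SG \<omega>})"
      using t0 by (intro finite_measure_Union[symmetric]) auto
    also have "\<dots> \<le> prob {x\<in>space M. t \<le> \<bar>SG x\<bar>}"
      by (intro finite_measure_mono) auto
    finally show ?thesis using abs2 sym by simp
  qed
  define A where "A = {\<omega>\<in>space M. real n * f\<^sub>c - real n * b < SB \<omega>}"
  define C where "C = {\<omega>\<in>space M. - t \<le> SG \<omega>}"
  have Asets: "A \<in> sets M" unfolding A_def by measurable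
  have Csets: "C \<in> sets M" unfolding C_def by measurable
  have pA: "1 - \<eta>\<^sub>s \<le> prob A"
  proof -
    have "A = space M - {\<omega>\<in>space M. SB \<omega> \<le> real n * f\<^sub>c - real n * b}"
      unfolding A_def by auto
    then have "prob A = 1 - prob {\<omega>\<in>space M. SB \<omega> \<le> real n * f\<^sub>c - real n * b}"
      by (simp add: prob_compl)
    then show ?thesis using hoeff by simp
  qed
  have pC: "1 - \<eta>\<^sub>g \<le> prob C"
  proof -
    have "C = space M - {\<omega>\<in>space M. SG \<omega> < - t}"
      unfolding C_def by auto
    then have "prob C = 1 - prob {\<omega>\<in>space M. SG \<omega> < - t}"
      by (simp add: prob_compl)
    then show ?thesis using geo by simp
  qed
  have pAC: "prob (A \<inter> C) = prob A * prob C"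
  proof -
    have "\<P>(x in M. SB x \<in> {real n * f\<^sub>c - real n * b<..} \<and> SG x \<in> {- t..}) =
          \<P>(x in M. SB x \<in> {real n * f\<^sub>c - real n * b<..}) * \<P>(x in M. SG x \<in> {- t..})"
      by (rule prob_indep_random_variable[OF indSBSG]) auto
    moreover have "A \<inter> C = {x \<in> space M. SB x \<in> {real n * f\<^sub>c - real n * b<..} \<and> SG x \<in> {- t..}}"
      unfolding A_def C_def by auto
    moreover have "A = {x \<in> space M. SB x \<in> {real n * f\<^sub>c - real n * b<..}}"
      unfolding A_def by auto
    moreover have "C = {x \<in> space M. SG x \<in> {- t..}}"
      unfolding C_def by auto
    ultimately show ?thesis by simp
  qed
  have prodle: "(1 - \<eta>\<^sub>g) * (1 - \<eta>\<^sub>s) \<le> prob (A \<inter> C)"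
    unfolding pAC using pA pC assms(8,10)
    by (metis mult.commute mult_mono diff_ge_0_iff_ge less_imp_le measure_nonneg)
  define E1 where "E1 = {\<omega>\<in>space M. f\<^sub>c \<le> (SB \<omega> + SG \<omega>) / real n + a + b}"
  define E2 where "E2 = {\<omega>\<in>space M. (SB \<omega> + SG \<omega>) / real n + a + b \<le> f \<longrightarrow> f\<^sub>c \<le> f}"
  have E1sets: "E1 \<in> sets M" unfolding E1_def by measurable
  have E2sets: "E2 \<in> sets M" unfolding E2_def by measurable
  have ACsub: "A \<inter> C \<subseteq> E1"
  proof
    fix \<omega> assume "\<omega> \<in> A \<inter> C"
    then have w: "\<omega> \<in> space M" "real n * f\<^sub>c - real n * b < SB \<omega>" "- (real n * a) \<le> SG \<omega>"
      unfolding A_def C_def t_def by auto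
    have np: "0 < real n" using n1 by simp
    have "real n * (f\<^sub>c - a - b) \<le> SB \<omega> + SG \<omega>"
      using w(2,3) by (simp add: algebra_simps)
    then have "f\<^sub>c - a - b \<le> (SB \<omega> + SG \<omega>) / real n"
      using np by (simp add: field_simps)
    then show "\<omega> \<in> E1" unfolding E1_def using w(1) by simp
  qed
  have E12: "E1 \<subseteq> E2" unfolding E1_def E2_def by auto
  have r1: "(1 - \<eta>\<^sub>g) * (1 - \<eta>\<^sub>s) \<le> prob E1"
    using prodle finite_measure_mono[OF ACsub E1sets] by linarith
  have r2: "(1 - \<eta>\<^sub>g) * (1 - \<eta>\<^sub>s) \<le> prob E2"
    using r1 finite_measure_mono[OF E12 E2sets] by linarith
  show ?thesis
    using r1 r2 unfolding E1_def E2_def SB_def SG_def a_def b_def n_def \<alpha>_def by simp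
qed

end
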